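(* Let $G$ be a torsion-free group, $\mathbb{F}$ a field, $\alpha$ a zero divisor in $\mathbb{F}[G]$ with $|supp(\alpha)|=4$ and $|S_\alpha|=12$, and $\beta$ a non-zero element of $\mathbb{F}[G]$ with $\alpha\beta=0$. If the maximum degree of $Z(\alpha,\beta)$ is $5$, then the number of vertices of degree $5$ in $Z(\alpha,\beta)$ is a multiple of $6$.
   Context: $supp(\gamma)=\{x\in G:\gamma_x\ne0\}$; $S_\alpha=\{h^{-1}h':h\ne h',\ h,h'\in supp(\alpha)\}$. The zero-divisor graph $Z(\alpha,\beta)$ is the multigraph with vertex set $supp(\beta)$ whose edges are the sets $\{(h,h',g,g'),(h',h,g',g)\}$ with $h,h'\in supp(\alpha)$, $g,g'\in supp(\beta)$, $g\ne g'$, $hg=h'g'$, each joining $g$ and $g'$; the degree of a vertex is the number of incident edges. *)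

theory Defs
  imports Main
begin

text \<open>The group G is the type 'g of class group_add (written additively, not
necessarily commutative): the paper's product hg is h + g, the inverse h^-1 is -h.
Elements of the group ring F[G] are finitely supported functions 'g => 'f.\<close>

definition torsion_free_group :: "'g::group_add itself \<Rightarrow> bool" where
  "torsion_free_group _ \<longleftrightarrow> (\<forall>x::'g. x \<noteq> 0 \<longrightarrow> (\<forall>n::nat. n > 0 \<longrightarrow> ((+) x ^^ n) 0 \<noteq> 0))"

definition supp :: "('g \<Rightarrow> 'f::zero) \<Rightarrow> 'g set" where
  "supp \<gamma> = {x. \<gamma> x \<noteq> 0}"

definition in_group_ring :: "('g \<Rightarrow> 'f::zero) \<Rightarrow> bool" where
  "in_group_ring \<gamma> \<longleftrightarrow> finite (supp \<gamma>)"

definition gr_mult :: "('g::group_add \<Rightarrow> 'f::field) \<Rightarrow> ('g \<Rightarrow> 'f) \<Rightarrow> 'g \<Rightarrow> 'f" where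
  "gr_mult \<alpha> \<beta> = (\<lambda>x. \<Sum>h\<in>supp \<alpha>. \<alpha> h * \<beta> (- h + x))"

definition zero_divisor :: "('g::group_add \<Rightarrow> 'f::field) \<Rightarrow> bool" where
  "zero_divisor \<alpha> \<longleftrightarrow> in_group_ring \<alpha> \<and> \<alpha> \<noteq> (\<lambda>_. 0) \<and>
     (\<exists>\<beta>. in_group_ring \<beta> \<and> \<beta> \<noteq> (\<lambda>_. 0) \<and> (gr_mult \<alpha> \<beta> = (\<lambda>_. 0) \<or> gr_mult \<beta> \<alpha> = (\<lambda>_. 0)))"

definition S_set :: "('g::group_add \<Rightarrow> 'f::zero) \<Rightarrow> 'g set" where
  "S_set \<alpha> = {- h + h' | h h'. h \<noteq> h' \<and> h \<in> supp \<alpha> \<and> h' \<in> supp \<alpha>}"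

text \<open>Edges of the zero-divisor graph Z(\<alpha>,\<beta>); the edge {(h,h',g,g'),(h',h,g',g)} joins g and g'.\<close>
definition zd_edges :: "('g::group_add \<Rightarrow> 'f::zero) \<Rightarrow> ('g \<Rightarrow> 'f) \<Rightarrow> ('g \<times> 'g \<times> 'g \<times> 'g) set set" where
  "zd_edges \<alpha> \<beta> = {{(h, h', g, g'), (h', h, g', g)} | h h' g g'.
      h \<in> supp \<alpha> \<and> h' \<in> supp \<alpha> \<and> g \<in> supp \<beta> \<and> g' \<in> supp \<beta> \<and> g \<noteq> g' \<and> h + g = h' + g'}"

definition zd_degree :: "('g::group_add \<Rightarrow> 'f::zero) \<Rightarrow> ('g \<Rightarrow> 'f) \<Rightarrow> 'g \<Rightarrow> nat" where
  "zd_degree \<alpha> \<beta> v = card {e \<in> zd_edges \<alpha> \<beta>. \<exists>h h' g'. (h, h', v, g') \<in> e}"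

end

theory Submission
  imports Defs
begin

lemma deg_formula:
  fixes \<alpha> \<beta> :: "'g::group_add \<Rightarrow> 'f::zero"
  assumes v: "v \<in> supp \<beta>"
  shows "zd_degree \<alpha> \<beta> v = card (SIGMA h:supp \<alpha>. {h'\<in>supp \<alpha>. h' \<noteq> h \<and> -h'+h+v \<in> supp \<beta>})"
proof -
  define P where "P = (SIGMA h:supp \<alpha>. {h'\<in>supp \<alpha>. h' \<noteq> h \<and> -h'+h+v \<in> supp \<beta>})"
  define f where "f = (\<lambda>(h::'g,h'::'g). {(h,h',v,-h'+h+v),(h',h,-h'+h+v,v)})"
  have ne: "-h'+h+v \<noteq> v" if "h' \<noteq> h" for h h' :: 'g
  proof
    assume "-h'+h+v = v"
    hence z: "-h'+h = 0" using add_right_cancel[of "-h'+h" v 0] by simp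
    have "h = h' + (-h'+h)" by simp
    also have "\<dots> = h'" using z by simp
    finally show False using that by simp
  qed
  have bij: "bij_betw f P {e \<in> zd_edges \<alpha> \<beta>. \<exists>h h' g'. (h, h', v, g') \<in> e}"
    unfolding bij_betw_def
  proof
    show "inj_on f P"
    proof (rule inj_onI)
      fix p q assume p: "p \<in> P" and q: "q \<in> P" and e: "f p = f q"
      obtain h1 h1' where p1: "p = (h1,h1')" by force
      obtain h2 h2' where q1: "q = (h2,h2')" by force
      have n2: "h2' \<noteq> h2" using q q1 P_def by auto
      have fp: "f p = {(h1,h1',v,-h1'+h1+v),(h1',h1,-h1'+h1+v,v)}" using p1 f_def by simp
      have fq: "f q = {(h2,h2',v,-h2'+h2+v),(h2',h2,-h2'+h2+v,v)}" using q1 f_def by simp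
      have "(h1,h1',v,-h1'+h1+v) \<in> f p" unfolding fp by simp
      hence "(h1,h1',v,-h1'+h1+v) \<in> f q" unfolding e .
      hence "(h1,h1',v,-h1'+h1+v) = (h2,h2',v,-h2'+h2+v) \<or> (h1,h1',v,-h1'+h1+v) = (h2',h2,-h2'+h2+v,v)"
        using fq by simp
      moreover have nv: "v \<noteq> -h2'+h2+v" using ne[OF n2] by (rule not_sym)
      ultimately have "h1 = h2 \<and> h1' = h2'" by (elim disjE) (simp_all only: prod.inject nv simp_thms)
      thus "p = q" using p1 q1 by simp
    qed
    show "f ` P = {e \<in> zd_edges \<alpha> \<beta>. \<exists>h h' g'. (h, h', v, g') \<in> e}"
    proof
      show "f ` P \<subseteq> {e \<in> zd_edges \<alpha> \<beta>. \<exists>h h' g'. (h, h', v, g') \<in> e}"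
      proof
        fix e assume "e \<in> f ` P"
        then obtain h h' where hp: "(h,h') \<in> P" and e: "e = f (h,h')" by auto
        have "h + v = h' + (-h'+h+v)" by (simp add: add.assoc)
        moreover have "v \<noteq> -h'+h+v" using ne[of h' h] hp P_def by auto
        ultimately have "e \<in> zd_edges \<alpha> \<beta>" using hp P_def v e f_def unfolding zd_edges_def by blast
        moreover have "(h,h',v,-h'+h+v) \<in> e" using e f_def by auto
        ultimately show "e \<in> {e \<in> zd_edges \<alpha> \<beta>. \<exists>h h' g'. (h, h', v, g') \<in> e}" by blast
      qed
      show "{e \<in> zd_edges \<alpha> \<beta>. \<exists>h h' g'. (h, h', v, g') \<in> e} \<subseteq> f ` P"
      proof
        fix e assume "e \<in> {e \<in> zd_edges \<alpha> \<beta>. \<exists>h h' g'. (h, h', v, g') \<in> e}"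
        then obtain x y z a a' g g' where ed: "e = {(a, a', g, g'), (a', a, g', g)}"
          and props: "a \<in> supp \<alpha>" "a' \<in> supp \<alpha>" "g \<in> supp \<beta>" "g' \<in> supp \<beta>" "g \<noteq> g'" "a + g = a' + g'"
          and inn: "(x,y,v,z) \<in> e"
          unfolding zd_edges_def by blast
        have eqs: "g' = -a'+a+g" "g = -a+a'+g'" using props(6)
          by (metis add.assoc minus_add_cancel)+
        have aa: "a \<noteq> a'" using props(5,6) by auto
        show "e \<in> f ` P"
        proof (cases "g = v")
          case True
          have "(a,a') \<in> P" using props aa eqs(1) True P_def by auto
          moreover have "e = f (a,a')" using ed True eqs(1) f_def by auto
          ultimately show ?thesis by blast
        next
          case False
          hence "g' = v" using inn ed by auto
          have "(a',a) \<in> P" using props aa eqs(2) \<open>g' = v\<close> P_def by auto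
          moreover have "e = f (a',a)" using ed \<open>g' = v\<close> eqs(2) f_def by auto
          ultimately show ?thesis by blast
        qed
      qed
    qed
  qed
  show ?thesis unfolding zd_degree_def P_def[symmetric] using bij_betw_same_card[OF bij] by simp
qed

lemma fiber_card:
  fixes A B :: "'g::group_add set"
  assumes fA: "finite A" and fB: "finite B" and h: "h \<in> A" and v: "v \<in> B"
  shows "card {h'\<in>A. h' \<noteq> h \<and> -h'+h+v \<in> B} = card {p\<in>A\<times>B. fst p + snd p = h + v} - 1"
proof -
  have bij: "bij_betw (\<lambda>h'. (h', -h'+h+v)) {h'\<in>A. -h'+h+v \<in> B} {p\<in>A\<times>B. fst p + snd p = h + v}"
    unfolding bij_betw_def
  proof
    show "inj_on (\<lambda>h'. (h', -h'+h+v)) {h'\<in>A. -h'+h+v \<in> B}" by (auto intro: inj_onI)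
    show "(\<lambda>h'. (h', -h'+h+v)) ` {h'\<in>A. -h'+h+v \<in> B} = {p\<in>A\<times>B. fst p + snd p = h + v}"
    proof
      show "(\<lambda>h'. (h', -h'+h+v)) ` {h'\<in>A. -h'+h+v \<in> B} \<subseteq> {p\<in>A\<times>B. fst p + snd p = h + v}"
        by (auto simp: add.assoc)
      show "{p\<in>A\<times>B. fst p + snd p = h + v} \<subseteq> (\<lambda>h'. (h', -h'+h+v)) ` {h'\<in>A. -h'+h+v \<in> B}"
      proof
        fix p assume p: "p \<in> {p\<in>A\<times>B. fst p + snd p = h + v}"
        obtain a b where ab: "p = (a,b)" by force
        have sab: "a + b = h + v" using p ab by simp
        have "b = -a + (a+b)" by simp
        also have "\<dots> = -a+(h+v)" using sab by simp
        also have "\<dots> = -a+h+v" by (simp add: add.assoc)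
        finally have "b = -a+h+v" .
        thus "p \<in> (\<lambda>h'. (h', -h'+h+v)) ` {h'\<in>A. -h'+h+v \<in> B}" using p ab by auto
      qed
    qed
  qed
  have "{h'\<in>A. h' \<noteq> h \<and> -h'+h+v \<in> B} = {h'\<in>A. -h'+h+v \<in> B} - {h}" by auto
  moreover have "h \<in> {h'\<in>A. -h'+h+v \<in> B}" using h v by simp
  ultimately show ?thesis using bij_betw_same_card[OF bij] fA
    by (simp add: card_Diff_singleton)
qed

lemma fiber_ge2:
  fixes \<alpha> \<beta> :: "'g::group_add \<Rightarrow> 'f::field"
  assumes fA: "finite (supp \<alpha>)" and fB: "finite (supp \<beta>)" and h: "h \<in> supp \<alpha>" and v: "v \<in> supp \<beta>"
    and z: "gr_mult \<alpha> \<beta> = (\<lambda>_. 0)"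
  shows "card {p\<in>supp \<alpha>\<times>supp \<beta>. fst p + snd p = h + v} \<ge> 2"
proof (rule ccontr)
  let ?A = "supp \<alpha>" and ?B = "supp \<beta>"
  assume "\<not> ?thesis"
  hence c: "card {h'\<in>?A. h' \<noteq> h \<and> -h'+h+v \<in> ?B} = 0" using fiber_card[OF fA fB h v] by simp
  have emp: "{h'\<in>?A. h' \<noteq> h \<and> -h'+h+v \<in> ?B} = {}" using c fA by simp
  have "0 = gr_mult \<alpha> \<beta> (h+v)" using z by simp
  also have "\<dots> = (\<Sum>h'\<in>?A. \<alpha> h' * \<beta> (- h' + (h+v)))" by (simp add: gr_mult_def)
  also have "\<dots> = \<alpha> h * \<beta> (- h + (h+v)) + (\<Sum>h'\<in>?A-{h}. \<alpha> h' * \<beta> (- h' + (h+v)))"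
    using fA h by (simp add: sum.remove)
  also have "(\<Sum>h'\<in>?A-{h}. \<alpha> h' * \<beta> (- h' + (h+v))) = 0"
  proof (rule sum.neutral, intro ballI)
    fix h' assume "h' \<in> ?A - {h}"
    hence "-h'+h+v \<notin> ?B" using emp by blast
    hence "\<beta> (- h' + (h+v)) = 0" by (simp add: supp_def add.assoc)
    thus "\<alpha> h' * \<beta> (- h' + (h+v)) = 0" by simp
  qed
  finally have "\<alpha> h * \<beta> v = 0" by (simp add: add.assoc[symmetric])
  thus False using h v by (simp add: supp_def)
qed

theorem mainTheorem12:
  fixes \<alpha> \<beta> :: "'g::group_add \<Rightarrow> 'f::field"
  assumes "torsion_free_group TYPE('g)"
    and "zero_divisor \<alpha>"
    and "card (supp \<alpha>) = 4"
    and "card (S_set \<alpha>) = 12"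
    and "in_group_ring \<beta>" and "\<beta> \<noteq> (\<lambda>_. 0)"
    and "gr_mult \<alpha> \<beta> = (\<lambda>_. 0)"
    and "Max (zd_degree \<alpha> \<beta> ` supp \<beta>) = 5"
  shows "6 dvd card {v \<in> supp \<beta>. zd_degree \<alpha> \<beta> v = 5}"
proof -
  define A where "A = supp \<alpha>"
  define B where "B = supp \<beta>"
  define F where "F = (\<lambda>x. {p\<in>A\<times>B. fst p + snd p = x})"
  define k where "k = (\<lambda>p. card (F (fst p + snd p)))"
  have fA: "finite A" using assms(2) unfolding A_def zero_divisor_def in_group_ring_def by blast
  have fB: "finite B" using assms(5) unfolding B_def in_group_ring_def by blast
  have cA: "card A = 4" using assms(3) A_def by simp
  have k2: "k (h,v) \<ge> 2" if "h \<in> A" "v \<in> B" for h v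
    using fiber_ge2[OF _ _ _ _ assms(7), of h v] that fA fB unfolding k_def F_def A_def B_def by simp
  have deg: "zd_degree \<alpha> \<beta> v = (\<Sum>h\<in>A. k (h,v) - 1)" if v: "v \<in> B" for v
  proof -
    have "zd_degree \<alpha> \<beta> v = card (SIGMA h:A. {h'\<in>A. h' \<noteq> h \<and> -h'+h+v \<in> B})"
      using deg_formula[of v \<beta> \<alpha>] v unfolding A_def B_def by simp
    also have "\<dots> = (\<Sum>h\<in>A. card {h'\<in>A. h' \<noteq> h \<and> -h'+h+v \<in> B})"
      using fA by (simp add: card_SigmaI)
    also have "\<dots> = (\<Sum>h\<in>A. k (h,v) - 1)"
      by (rule sum.cong) (use fiber_card[OF fA fB _ v] in \<open>auto simp: k_def F_def\<close>)
    finally show ?thesis .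
  qed
  have Bne: "B \<noteq> {}" using assms(6) unfolding B_def supp_def by auto
  have le5: "zd_degree \<alpha> \<beta> v \<le> 5" if "v \<in> B" for v
    using Max_ge[of "zd_degree \<alpha> \<beta> ` supp \<beta>" "zd_degree \<alpha> \<beta> v"] assms(8) fB that B_def by simp
  have deg4: "zd_degree \<alpha> \<beta> v = 4 + (\<Sum>h\<in>A. k (h,v) - 2)" if v: "v \<in> B" for v
  proof -
    have "(\<Sum>h\<in>A. k (h,v) - 1) = (\<Sum>h\<in>A. 1 + (k (h,v) - 2))"
    proof (rule sum.cong)
      fix h assume "h \<in> A"
      from k2[OF this v] show "k (h,v) - 1 = 1 + (k (h,v) - 2)" by simp
    qed simp
    also have "\<dots> = 4 + (\<Sum>h\<in>A. k (h,v) - 2)" by (simp only: sum.distrib) (simp add: cA)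
    finally show ?thesis using deg[OF v] by simp
  qed
  have exc: "(\<Sum>h\<in>A. k (h,v) - 2) \<le> 1" if v: "v \<in> B" for v
    using deg4[OF v] le5[OF v] by simp
  have kle3: "k (h,v) \<le> 3" if "h \<in> A" "v \<in> B" for h v
  proof -
    have "k (h,v) - 2 \<le> (\<Sum>h\<in>A. k (h,v) - 2)"
      using that fA by (intro member_le_sum) auto
    thus ?thesis using exc[OF that(2)] by simp
  qed
  have uniq: "h1 = h2" if "h1 \<in> A" "h2 \<in> A" "v \<in> B" "k (h1,v) = 3" "k (h2,v) = 3" for h1 h2 v
  proof (rule ccontr)
    assume "h1 \<noteq> h2"
    hence "(\<Sum>h\<in>{h1,h2}. k (h,v) - 2) = 2" using that by simp
    moreover have "(\<Sum>h\<in>{h1,h2}. k (h,v) - 2) \<le> (\<Sum>h\<in>A. k (h,v) - 2)"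
      using that fA by (intro sum_mono2) auto
    ultimately show False using exc[OF that(3)] by simp
  qed
  have deg5: "zd_degree \<alpha> \<beta> v = 5 \<longleftrightarrow> (\<exists>h\<in>A. k (h,v) = 3)" if v: "v \<in> B" for v
  proof
    assume "zd_degree \<alpha> \<beta> v = 5"
    hence "(\<Sum>h\<in>A. k (h,v) - 2) \<noteq> 0" using deg4[OF v] by simp
    have "\<exists>h\<in>A. k (h,v) - 2 \<noteq> 0"
    proof (rule ccontr)
      assume "\<not> (\<exists>h\<in>A. k (h,v) - 2 \<noteq> 0)"
      hence "(\<Sum>h\<in>A. k (h,v) - 2) = 0" by (intro sum.neutral) simp
      thus False using \<open>(\<Sum>h\<in>A. k (h,v) - 2) \<noteq> 0\<close> by simp
    qed
    then obtain h where h: "h \<in> A" "k (h,v) - 2 \<noteq> 0" by blast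
    have "k (h,v) = 3" using kle3[OF h(1) v] h(2) by linarith
    thus "\<exists>h\<in>A. k (h,v) = 3" using h(1) by blast
  next
    assume "\<exists>h\<in>A. k (h,v) = 3"
    then obtain h where h: "h \<in> A" "k (h,v) = 3" by blast
    have "k (h,v) - 2 \<le> (\<Sum>h\<in>A. k (h,v) - 2)"
      using h fA by (intro member_le_sum) auto
    thus "zd_degree \<alpha> \<beta> v = 5" using deg4[OF v] exc[OF v] h by simp
  qed
  define T where "T = {p\<in>A\<times>B. k p = 3}"
  define U where "U = A\<times>B - T"
  have fT: "finite T" and fU: "finite U" using fA fB unfolding T_def U_def by auto
  have "{v \<in> supp \<beta>. zd_degree \<alpha> \<beta> v = 5} = snd ` T"
    using deg5 unfolding T_def B_def[symmetric] by force
  moreover have "inj_on snd T"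
  proof (rule inj_onI)
    fix p q assume "p \<in> T" "q \<in> T" "snd p = snd q"
    thus "p = q" using uniq unfolding T_def by (cases p, cases q) auto
  qed
  ultimately have c5: "card {v \<in> supp \<beta>. zd_degree \<alpha> \<beta> v = 5} = card T"
    by (simp add: card_image)
  define s where "s = (\<lambda>p::'g\<times>'g. fst p + snd p)"
  have kF: "k p = card (F (s p))" for p unfolding k_def s_def by simp
  have Fsub: "F y \<subseteq> A \<times> B" for y unfolding F_def by blast
  have inF: "q \<in> F y \<longleftrightarrow> q \<in> A \<times> B \<and> s q = y" for q y unfolding F_def s_def by blast
  have fib: "{q\<in>W. s q = s p} = F (s p)"
    if W: "W \<subseteq> A\<times>B" "\<And>q. q \<in> A\<times>B \<Longrightarrow> k q = k p \<Longrightarrow> q \<in> W" for W p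
  proof
    show "{q\<in>W. s q = s p} \<subseteq> F (s p)" using W(1) inF by blast
    show "F (s p) \<subseteq> {q\<in>W. s q = s p}"
    proof
      fix q assume q: "q \<in> F (s p)"
      hence q1: "q \<in> A\<times>B" "s q = s p" using inF by blast+
      have "k q = k p" using kF q1(2) by simp
      thus "q \<in> {q\<in>W. s q = s p}" using W(2)[OF q1(1)] q1(2) by blast
    qed
  qed
  have grp: "card W = (\<Sum>y\<in>s ` W. card {q\<in>W. s q = y})" if "finite W" for W
  proof -
    have "card W = (\<Sum>p\<in>W. 1)" by simp
    also have "\<dots> = (\<Sum>y\<in>s ` W. \<Sum>p\<in>{q\<in>W. s q = y}. 1)"
      by (rule sum.group[symmetric]) (use that in auto)
    finally show ?thesis by simp
  qed
  have TAB: "T \<subseteq> A\<times>B" unfolding T_def by blast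
  have cardT: "card T = 3 * card (s ` T)"
  proof -
    have "card T = (\<Sum>y\<in>s ` T. card {q\<in>T. s q = y})" using grp[OF fT] .
    also have "\<dots> = (\<Sum>y\<in>s ` T. 3)"
    proof (rule sum.cong)
      fix y assume "y \<in> s ` T"
      then obtain p where p: "p \<in> T" "y = s p" by blast
      have kp: "k p = 3" using p(1) unfolding T_def by blast
      have "{q\<in>T. s q = y} = F (s p)" unfolding p(2)
        by (rule fib) (use TAB kp in \<open>auto simp: T_def\<close>)
      thus "card {q\<in>T. s q = y} = 3" using kp kF by simp
    qed simp
    finally show ?thesis by simp
  qed
  have UAB: "U \<subseteq> A\<times>B" unfolding U_def by blast
  have kU: "k p = 2" if pU: "p \<in> U" for p
  proof -
    obtain h v where p: "p = (h,v)" "h \<in> A" "v \<in> B" using pU UAB by blast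
    have "k p \<noteq> 3" using pU unfolding U_def T_def by blast
    thus ?thesis using k2[OF p(2,3)] kle3[OF p(2,3)] p(1) by simp
  qed
  have cardU: "card U = 2 * card (s ` U)"
  proof -
    have "card U = (\<Sum>y\<in>s ` U. card {q\<in>U. s q = y})" using grp[OF fU] .
    also have "\<dots> = (\<Sum>y\<in>s ` U. 2)"
    proof (rule sum.cong)
      fix y assume "y \<in> s ` U"
      then obtain p where p: "p \<in> U" "y = s p" by blast
      have kp: "k p = 2" using kU[OF p(1)] .
      have "{q\<in>U. s q = y} = F (s p)" unfolding p(2)
      proof (rule fib[OF UAB])
        fix q assume "q \<in> A\<times>B" "k q = k p"
        thus "q \<in> U" using kp unfolding U_def T_def by simp
      qed
      thus "card {q\<in>U. s q = y} = 2" using kp kF by simp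
    qed simp
    finally show ?thesis by simp
  qed
  have "T \<union> U = A \<times> B" using TAB unfolding U_def by blast
  moreover have "T \<inter> U = {}" unfolding U_def by blast
  ultimately have "card T + card U = card (A \<times> B)" using card_Un_disjoint[OF fT fU] by simp
  also have "\<dots> = 4 * card B" using cA by (simp add: card_cartesian_product)
  finally have "3 * card (s ` T) + 2 * card (s ` U) = 4 * card B"
    using cardT cardU by simp
  hence "6 dvd card T" using cardT by presburger
  thus ?thesis using c5 by simp
qed

end
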